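(* Let $G=(V,E)$ be a simple connected graph on $n\ge2$ nodes with all degrees at most $D$, let $e_1\in E$, and let $w:E\to\mathbb{R}_+$. Then there exist a spanning tree $F$ of $G$ with $e_1\in E(F)$ and integers $(k_e: e\in E(F))$ such that $k_{e_1}=1$, $k_e\le D$ for all $e\in E(F)$, $\sum_{e\in E(F)}k_e=|E|$, and $$\sum_{e\in E}w(e)\le\sum_{e\in E(F)}k_e\,w(e).$$ *)

theory Defs
  imports Complex_Main
begin

definition simple_graph :: "'a set \<Rightarrow> 'a set set \<Rightarrow> bool" where
  "simple_graph V E \<longleftrightarrow> finite V \<and>
     (\<forall>e\<in>E. \<exists>u v. e = {u, v} \<and> u \<noteq> v \<and> u \<in> V \<and> v \<in> V)"

fun walk :: "'a set set \<Rightarrow> 'a list \<Rightarrow> bool" where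
  "walk E [] = False"
| "walk E [v] = True"
| "walk E (u # v # vs) \<longleftrightarrow> {u, v} \<in> E \<and> walk E (v # vs)"

definition connected_graph :: "'a set \<Rightarrow> 'a set set \<Rightarrow> bool" where
  "connected_graph V E \<longleftrightarrow>
     (\<forall>u\<in>V. \<forall>v\<in>V. \<exists>p. walk E p \<and> set p \<subseteq> V \<and> hd p = u \<and> last p = v)"

definition has_cycle :: "'a set set \<Rightarrow> bool" where
  "has_cycle E \<longleftrightarrow> (\<exists>p. length p \<ge> 3 \<and> distinct p \<and> walk E p \<and> {last p, hd p} \<in> E)"

definition degree :: "'a set set \<Rightarrow> 'a \<Rightarrow> nat" where
  "degree E v = card {e\<in>E. v \<in> e}"

definition spanning_tree :: "'a set \<Rightarrow> 'a set set \<Rightarrow> 'a set set \<Rightarrow> bool" where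
  "spanning_tree V E F \<longleftrightarrow> F \<subseteq> E \<and> connected_graph V F \<and> \<not> has_cycle F"

end

theory Submission imports Defs begin

lemma walk_nonempty: "walk E p \<Longrightarrow> p \<noteq> []"
  by (cases p) auto

lemma walk_mono: "walk E p \<Longrightarrow> E \<subseteq> E' \<Longrightarrow> walk E' p"
  by (induction E p rule: walk.induct) auto

lemma walk_snoc: "walk E p \<Longrightarrow> {last p, v} \<in> E \<Longrightarrow> walk E (p @ [v])"
  by (induction E p rule: walk.induct) auto

lemma walk_Cons: "walk E p \<Longrightarrow> {v, hd p} \<in> E \<Longrightarrow> walk E (v # p)"
  by (cases p) auto

lemma walk_appendD: "walk E (xs @ ys) \<Longrightarrow> ys \<noteq> [] \<Longrightarrow> walk E ys"
proof (induction xs)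
  case (Cons a xs)
  then show ?case by (cases "xs @ ys") auto
qed auto

lemma walk_last_edge: "walk E (xs @ [v]) \<Longrightarrow> xs \<noteq> [] \<Longrightarrow> {last xs, v} \<in> E"
proof (induction xs)
  case (Cons a xs)
  then show ?case by (cases xs) auto
qed auto

lemma walk_prefix: "walk E (xs @ ys) \<Longrightarrow> xs \<noteq> [] \<Longrightarrow> walk E xs"
proof (induction xs)
  case (Cons a xs)
  then show ?case by (cases xs) auto
qed auto

lemma walk_cross: "walk E p \<Longrightarrow> hd p \<in> S \<Longrightarrow> last p \<notin> S \<Longrightarrow> \<exists>x y. {x,y}\<in>E \<and> x\<in>S \<and> y\<notin>S"
  by (induction E p rule: walk.induct) auto

lemma walk_avoid: "walk (insert f F) p \<Longrightarrow> v \<in> f \<Longrightarrow> v \<notin> set p \<Longrightarrow> walk F p"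
  by (induction "insert f F" p rule: walk.induct) auto

lemma conn_step:
  assumes "connected_graph S F" "u \<in> S"
  shows "connected_graph (insert v S) (insert {u,v} F)"
  unfolding connected_graph_def
proof (intro ballI)
  fix x y assume x: "x \<in> insert v S" and y: "y \<in> insert v S"
  have FF: "F \<subseteq> insert {u,v} F" by auto
  show "\<exists>p. walk (insert {u, v} F) p \<and> set p \<subseteq> insert v S \<and> hd p = x \<and> last p = y"
  proof (cases "x = v")
    case True
    show ?thesis
    proof (cases "y = v")
      case True
      then show ?thesis using \<open>x = v\<close> by (intro exI[of _ "[v]"]) auto
    next
      case False
      then have "y \<in> S" using y by auto
      then obtain p where p: "walk F p" "set p \<subseteq> S" "hd p = u" "last p = y"
        using assms unfolding connected_graph_def by blast
      have "walk (insert {u,v} F) (v # p)"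
        using walk_Cons[OF walk_mono[OF p(1) FF], of v] p(3) by (auto simp: insert_commute)
      then show ?thesis using p walk_nonempty[OF p(1)] True by (intro exI[of _ "v # p"]) auto
    qed
  next
    case False
    then have "x \<in> S" using x by auto
    show ?thesis
    proof (cases "y = v")
      case True
      obtain p where p: "walk F p" "set p \<subseteq> S" "hd p = x" "last p = u"
        using assms \<open>x \<in> S\<close> unfolding connected_graph_def by blast
      have "walk (insert {u,v} F) (p @ [v])"
        using walk_snoc[OF walk_mono[OF p(1) FF], of v] p(4) by auto
      then show ?thesis using p walk_nonempty[OF p(1)] True by (intro exI[of _ "p @ [v]"]) auto
    next
      case False
      then have "y \<in> S" using y by auto
      then obtain p where p: "walk F p" "set p \<subseteq> S" "hd p = x" "last p = y"
        using assms \<open>x \<in> S\<close> unfolding connected_graph_def by blast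
      then show ?thesis using walk_mono[OF p(1) FF] by (intro exI[of _ p]) auto
    qed
  qed
qed


lemma acyc_step:
  assumes nc: "\<not> has_cycle F" and vF: "\<forall>e\<in>F. v \<notin> e"
  shows "\<not> has_cycle (insert {u,v} F)"
proof
  let ?E = "insert {u,v} F"
  assume "has_cycle ?E"
  then obtain p where p: "length p \<ge> 3" "distinct p" "walk ?E p" "{last p, hd p} \<in> ?E"
    unfolding has_cycle_def by blast
  have key: "x = u" if "{x,v} \<in> ?E" "x \<noteq> v" for x
    using that vF by (auto simp: doubleton_eq_iff)
  have key2: "x = u" if "{v,x} \<in> ?E" "x \<noteq> v" for x
    using key[of x] that by (simp add: insert_commute)
  show False
  proof (cases "v \<in> set p")
    case False
    have "walk F p" using walk_avoid[OF p(3), of v] False by auto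
    moreover have "p \<noteq> []" using p(1) by auto
    then have "{last p, hd p} \<in> F" using p(4) False by (auto simp: doubleton_eq_iff)
    ultimately show False using nc p(1,2) unfolding has_cycle_def by blast
  next
    case True
    then obtain xs ys where pe: "p = xs @ v # ys" by (meson split_list)
    show False
    proof (cases "xs = []")
      case True
      then obtain y ys' where ys: "ys = y # ys'" "ys' \<noteq> []" using p(1) pe
        by (cases ys; cases "tl ys") auto
      have "{v, y} \<in> ?E" using p(3) pe True ys by auto
      moreover have "y \<noteq> v" using p(2) pe ys by auto
      ultimately have "y = u" using key2 by blast
      have "{last ys', v} \<in> ?E" using p(4) pe True ys by auto
      moreover have "last ys' \<noteq> v" using p(2) pe ys by auto
      ultimately have "last ys' = u" using key by blast
      moreover have "last ys' \<noteq> y" using p(2) pe ys by auto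
      ultimately show False using \<open>y = u\<close> by simp
    next
      case False
      have e1: "{last xs, v} \<in> ?E"
        using walk_last_edge[OF walk_prefix[of ?E "xs @ [v]" ys], OF _ _ False] p(3) pe by auto
      have n1: "last xs \<noteq> v" using p(2) pe False by auto
      have l1: "last xs = u" using key[OF e1 n1] .
      show False
      proof (cases "ys = []")
        case True
        obtain x xs' where xs: "xs = x # xs'" using False by (cases xs) auto
        have "xs' \<noteq> []" using p(1) pe True xs by auto
        have "{v, x} \<in> ?E" using p(4) pe True xs by auto
        moreover have "x \<noteq> v" using p(2) pe xs by auto
        ultimately have "x = u" using key2 by blast
        moreover have "last xs \<noteq> x" using p(2) pe xs \<open>xs' \<noteq> []\<close> by (cases xs' rule: rev_cases) auto
        ultimately show False using l1 by simp
      next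
        case False
        have "walk ?E (v # ys)" using walk_appendD[of ?E xs "v # ys"] p(3) pe by auto
        then have "{v, hd ys} \<in> ?E" using False by (cases ys) auto
        moreover have "hd ys \<noteq> v" using p(2) pe False by (cases ys) auto
        ultimately have "hd ys = u" using key2 by blast
        moreover have "hd ys \<noteq> last xs" using p(2) pe False \<open>xs \<noteq> []\<close> by (cases ys) auto
        ultimately show False using l1 by simp
      qed
    qed
  qed
qed


definition prim_inv :: "'a set \<Rightarrow> 'a set set \<Rightarrow> nat \<Rightarrow> ('a set \<Rightarrow> real) \<Rightarrow> 'a set \<Rightarrow> 'a set \<Rightarrow> 'a set set \<Rightarrow> ('a set \<Rightarrow> int) \<Rightarrow> bool" where
  "prim_inv V E D w e1 S F k \<longleftrightarrow> S \<subseteq> V \<and> F \<subseteq> {e\<in>E. e \<subseteq> S} \<and> connected_graph S F \<and>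
     \<not> has_cycle F \<and> e1 \<in> F \<and> k e1 = 1 \<and> (\<forall>e\<in>F. k e \<le> int D) \<and>
     (\<Sum>e\<in>F. k e) = int (card {e\<in>E. e \<subseteq> S}) \<and>
     (\<Sum>e\<in>{e\<in>E. e \<subseteq> S}. w e) \<le> (\<Sum>e\<in>F. real_of_int (k e) * w e)"

lemma sg_edge:
  assumes "simple_graph V E" "e \<in> E"
  shows "\<exists>u v. e = {u,v} \<and> u \<noteq> v \<and> u \<in> V \<and> v \<in> V"
proof -
  have "\<forall>e\<in>E. \<exists>u v. e = {u,v} \<and> u \<noteq> v \<and> u \<in> V \<and> v \<in> V"
    using assms(1) unfolding simple_graph_def by (rule conjunct2)
  then show ?thesis using assms(2) by (rule bspec)
qed

lemma finE: "simple_graph V E \<Longrightarrow> finite E"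
proof -
  assume a: "simple_graph V E"
  then have "E \<subseteq> Pow V" unfolding simple_graph_def by fastforce
  moreover have "finite V" using a unfolding simple_graph_def by blast
  ultimately show ?thesis using finite_subset[of E "Pow V"] by simp
qed

lemma prim_base:
  assumes sg: "simple_graph V E" and e1: "e1 \<in> E" and D: "D \<ge> 1"
  shows "\<exists>S F k. card S = 2 \<and> prim_inv V E D w e1 S F k"
proof -
  have "\<exists>a b. e1 = {a,b} \<and> a \<noteq> b \<and> a \<in> V \<and> b \<in> V"
    using sg_edge[OF sg e1] .
  then obtain a b where ab: "e1 = {a,b}" "a \<noteq> b" "a \<in> V" "b \<in> V" by (elim exE conjE) simp
  have ES: "{e\<in>E. e \<subseteq> {a,b}} = {e1}"
  proof -
    have "e = e1" if eE: "e \<in> E" "e \<subseteq> {a,b}" for e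
    proof -
      obtain x y where "e = {x,y}" "x \<noteq> y" using sg_edge[OF sg eE(1)] by (elim exE conjE) simp
      then show ?thesis using eE ab by auto
    qed
    then show ?thesis using e1 ab by auto
  qed
  have conn: "connected_graph {a,b} {e1}"
    unfolding connected_graph_def
  proof (intro ballI)
    fix x y assume "x \<in> {a,b}" "y \<in> {a,b}"
    then consider "x = a" "y = a" | "x = a" "y = b" | "x = b" "y = a" | "x = b" "y = b" by blast
    then show "\<exists>p. walk {e1} p \<and> set p \<subseteq> {a,b} \<and> hd p = x \<and> last p = y"
    proof cases
      case 1 then show ?thesis by (intro exI[of _ "[a]"]) auto
    next
      case 2 then show ?thesis using ab by (intro exI[of _ "[a,b]"]) auto
    next
      case 3 then show ?thesis using ab by (intro exI[of _ "[b,a]"]) (auto simp: insert_commute)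
    next
      case 4 then show ?thesis by (intro exI[of _ "[b]"]) auto
    qed
  qed
  have nc: "\<not> has_cycle {e1}"
  proof
    assume "has_cycle {e1}"
    then obtain p where p: "length p \<ge> 3" "distinct p" "walk {e1} p"
      unfolding has_cycle_def by blast
    then obtain x y z r where "p = x # y # z # r" 
      by (cases p; cases "tl p"; cases "tl (tl p)") auto
    then have "{x,y} = e1" "{y,z} = e1" "x \<noteq> z" "x \<noteq> y" using p by auto
    then show False by (auto simp: doubleton_eq_iff)
  qed
  show ?thesis
    apply (rule exI[of _ "{a,b}"], rule exI[of _ "{e1}"], rule exI[of _ "\<lambda>_. 1"])
    unfolding prim_inv_def using ab ES conn nc e1 D by simp
qed


lemma sg_sub: "simple_graph V E \<Longrightarrow> e \<in> E \<Longrightarrow> e \<subseteq> V"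
  using sg_edge[of V E e] by auto

lemma prim_step:
  assumes sg: "simple_graph V E" and cg: "connected_graph V E"
    and deg: "\<forall>v\<in>V. degree E v \<le> D"
    and inv: "prim_inv V E D w e1 S F k" and SV: "S \<noteq> V"
  shows "\<exists>S' F' k'. card S' = Suc (card S) \<and> prim_inv V E D w e1 S' F' k'"
proof -
  have finV: "finite V" using sg unfolding simple_graph_def by simp
  have finE: "finite E" using finE[OF sg] .
  have SsV: "S \<subseteq> V" and FS: "F \<subseteq> {e\<in>E. e \<subseteq> S}" and cS: "connected_graph S F"
    and ncF: "\<not> has_cycle F" and e1F: "e1 \<in> F" and ke1: "k e1 = 1"
    and kD: "\<forall>e\<in>F. k e \<le> int D" and ksum: "(\<Sum>e\<in>F. k e) = int (card {e\<in>E. e \<subseteq> S})"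
    and wsum: "(\<Sum>e\<in>{e\<in>E. e \<subseteq> S}. w e) \<le> (\<Sum>e\<in>F. real_of_int (k e) * w e)"
    using inv unfolding prim_inv_def by auto
  have finS: "finite S" using SsV finV finite_subset by blast
  have finF: "finite F" using FS finE finite_subset by (metis (no_types, lifting) mem_Collect_eq subsetI subset_eq)
  obtain a b where ab: "e1 = {a,b}" using sg_edge[OF sg] e1F FS by blast
  have sS: "a \<in> S" using ab e1F FS by auto
  obtain t where t: "t \<in> V" "t \<notin> S" using SV SsV by blast
  obtain p where p: "walk E p" "hd p = a" "last p = t"
    using cg sS SsV t unfolding connected_graph_def by blast
  define C where "C = {e\<in>E. \<exists>x y. e = {x,y} \<and> x \<in> S \<and> y \<notin> S}"
  have Cne: "C \<noteq> {}" using walk_cross[OF p(1), of S] p sS t unfolding C_def by auto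
  have finC: "finite C" using finE unfolding C_def by simp
  define m where "m = Max (w ` C)"
  have "m \<in> w ` C" unfolding m_def using finC Cne by simp
  then obtain f where fC: "f \<in> C" and wf: "w f = m" by auto
  have fmax: "\<forall>e\<in>C. w e \<le> w f" using finC wf unfolding m_def by simp
  obtain u v where f: "f = {u,v}" "u \<in> S" "v \<notin> S" "f \<in> E" using fC unfolding C_def by blast
  have vV: "v \<in> V" using sg_sub[OF sg f(4)] f by auto
  define ES where "ES = {e\<in>E. e \<subseteq> S}"
  define N where "N = {e\<in>E. v \<in> e \<and> e \<subseteq> insert v S}"
  have ES': "{e\<in>E. e \<subseteq> insert v S} = ES \<union> N" unfolding ES_def N_def by auto
  have disj: "ES \<inter> N = {}" unfolding ES_def N_def using f by auto
  have finES: "finite ES" "finite N" unfolding ES_def N_def using finE by auto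
  have NC: "N \<subseteq> C"
  proof
    fix e assume eN: "e \<in> N"
    then have eE: "e \<in> E" unfolding N_def by simp
    obtain x y where xy: "e = {x,y}" "x \<noteq> y" using sg_edge[OF sg eE] by blast
    show "e \<in> C"
    proof (cases "x = v")
      case True
      then have "y \<in> S" using eN xy unfolding N_def by auto
      then show ?thesis using eE xy True f(3) unfolding C_def by (auto simp: insert_commute)
    next
      case False
      then have "y = v" "x \<in> S" using eN xy unfolding N_def by auto
      then show ?thesis using eE xy f(3) unfolding C_def by auto
    qed
  qed
  have cardN: "card N \<le> D"
  proof -
    have "card N \<le> card {e\<in>E. v \<in> e}" unfolding N_def by (rule card_mono) (use finE in auto)
    also have "\<dots> \<le> D" using deg vV unfolding degree_def by auto
    finally show ?thesis .
  qed
  have fF: "f \<notin> F" using FS f by auto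
  have vF: "\<forall>e\<in>F. v \<notin> e" using FS f by auto
  define k' where "k' = k(f := int (card N))"
  have kk: "\<forall>e\<in>F. k' e = k e" using fF unfolding k'_def by auto
  have s1: "(\<Sum>e\<in>insert f F. k' e) = int (card N) + (\<Sum>e\<in>F. k e)"
    using sum.insert[OF finF fF, of k'] kk by (simp add: k'_def)
  have s2: "(\<Sum>e\<in>insert f F. real_of_int (k' e) * w e) = real (card N) * w f + (\<Sum>e\<in>F. real_of_int (k e) * w e)"
    using sum.insert[OF finF fF, of "\<lambda>e. real_of_int (k' e) * w e"] kk by (simp add: k'_def)
  have cES: "card {e\<in>E. e \<subseteq> insert v S} = card ES + card N"
    unfolding ES' using card_Un_disjoint[OF finES disj] .
  have wN: "(\<Sum>e\<in>N. w e) \<le> real (card N) * w f"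
    using sum_bounded_above[of N w "w f"] NC fmax by auto
  have wES: "(\<Sum>e\<in>{e\<in>E. e \<subseteq> insert v S}. w e) = (\<Sum>e\<in>ES. w e) + (\<Sum>e\<in>N. w e)"
    unfolding ES' using sum.union_disjoint[OF finES disj] .
  have "prim_inv V E D w e1 (insert v S) (insert f F) k'"
    unfolding prim_inv_def
  proof (intro conjI)
    show "insert v S \<subseteq> V" using SsV vV by auto
    show "insert f F \<subseteq> {e \<in> E. e \<subseteq> insert v S}" using FS f by auto
    show "connected_graph (insert v S) (insert f F)" using conn_step[OF cS f(2)] f by simp
    show "\<not> has_cycle (insert f F)" using acyc_step[OF ncF vF] f by simp
    show "e1 \<in> insert f F" using e1F by simp
    show "k' e1 = 1" using kk e1F ke1 by simp
    show "\<forall>e\<in>insert f F. k' e \<le> int D" using kk kD cardN by (simp add: k'_def)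
    show "(\<Sum>e\<in>insert f F. k' e) = int (card {e \<in> E. e \<subseteq> insert v S})"
      using s1 cES ksum unfolding ES_def by simp
    show "(\<Sum>e\<in>{e \<in> E. e \<subseteq> insert v S}. w e) \<le> (\<Sum>e\<in>insert f F. real_of_int (k' e) * w e)"
      using s2 wES wN wsum unfolding ES_def by simp
  qed
  moreover have "card (insert v S) = Suc (card S)" using finS f by simp
  ultimately show ?thesis by blast
qed


theorem lemma17:
  fixes V :: "'a set" and E :: "'a set set" and D :: nat
    and e1 :: "'a set" and w :: "'a set \<Rightarrow> real"
  assumes "simple_graph V E"
    and "connected_graph V E"
    and "card V \<ge> 2"
    and "\<forall>v\<in>V. degree E v \<le> D"
    and "e1 \<in> E"
    and "\<forall>e\<in>E. w e > 0"
  shows "\<exists>F (k :: 'a set \<Rightarrow> int).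
           spanning_tree V E F \<and> e1 \<in> F \<and> k e1 = 1 \<and>
           (\<forall>e\<in>F. k e \<le> int D) \<and>
           (\<Sum>e\<in>F. k e) = int (card E) \<and>
           (\<Sum>e\<in>E. w e) \<le> (\<Sum>e\<in>F. real_of_int (k e) * w e)"
proof -
  note sg = assms(1)
  have finV: "finite V" using sg unfolding simple_graph_def by simp
  have finE: "finite E" using finE[OF sg] .
  obtain a b where ab: "e1 = {a,b}" "a \<in> V" using sg_edge[OF sg assms(5)] by blast
  have "1 \<le> card {e\<in>E. a \<in> e}"
    using card_mono[of "{e\<in>E. a \<in> e}" "{e1}"] finE assms(5) ab by auto
  then have D1: "D \<ge> 1" using assms(4) ab unfolding degree_def by fastforce
  have main: "m \<le> card V \<Longrightarrow> \<exists>S F k. card S = m \<and> prim_inv V E D w e1 S F k" if "2 \<le> m" for m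
    using that
  proof (induction m rule: nat_induct_at_least)
    case base
    then show ?case using prim_base[OF sg assms(5) D1] by blast
  next
    case (Suc n)
    then obtain S F k where SFk: "card S = n" "prim_inv V E D w e1 S F k" by auto
    have "S \<noteq> V" using SFk Suc by auto
    then show ?case using prim_step[OF sg assms(2) assms(4) SFk(2)] SFk(1) by auto
  qed
  obtain S F k where SFk: "card S = card V" "prim_inv V E D w e1 S F k"
    using main[OF assms(3)] by blast
  have "S \<subseteq> V" using SFk unfolding prim_inv_def by simp
  then have SV: "S = V" using card_subset_eq[OF finV] SFk(1) by blast
  have EV: "{e\<in>E. e \<subseteq> V} = E" using sg_sub[OF sg] by blast
  have "spanning_tree V E F" using SFk(2) SV EV unfolding prim_inv_def spanning_tree_def by auto
  then show ?thesis using SFk(2) SV EV unfolding prim_inv_def by auto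
qed

end
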